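(* Let $M,K,N\in\mathbb{N}$ with $K\le M+1$, let $w_1,w_2\in\mathbb{N}$ with $\frac{2\pi}{w_2}\le\frac{2\pi}{w_1}$, let $f_1:\mathbb{R}\to\mathbb{R}$ be continuous and periodic with cycle length $\frac{2\pi}{w_1}$, let $\tau=\frac{2\pi}{w_2(M+1)}$, and let $T\subset[0,\frac{2\pi}{w_1}]$ be a set of $N$ times such that $X=\{(f_1(t),f_1(t+\tau),\dots,f_1(t+M\tau))^T:t\in T\}$ consists of $N$ points. Regard $X$ as an $N\times(M+1)$ matrix whose rows are these points, let $\lambda_1\ge\lambda_2\ge\dots\ge\lambda_N\ge0$ be the eigenvalues of $XX^T$ (with $\lambda_i=0$ for $i>M+1$), and let $\phi(X)\subset\mathbb{R}^K$ be the point cloud obtained by orthogonally projecting each point of $X$ onto its top $K$ principal components, i.e. the rows of $XV_K$ where $V_K$ consists of top $K$ right singular vectors of $X$. Let $\mathrm{score}(f_1|f_2)=\mathrm{mp}(\mathrm{dgm}_1(X))/\sqrt3$ and $\mathrm{score}_\phi(f_1|f_2)=\mathrm{mp}(\mathrm{dgm}_1(\phi(X)))/\sqrt3$. Then \[|\mathrm{score}(f_1|f_2)-\mathrm{score}_\phi(f_1|f_2)|\le\sqrt{\tfrac83}\,\Big(\sum_{i=K+1}^N\lambda_i^2\Big)^{1/4}.\]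
   Context: $\mathrm{dgm}_1(Y)$ denotes the 1-dimensional persistence diagram of the Vietoris–Rips filtration of a finite Euclidean point cloud $Y$, and $\mathrm{mp}(\cdot)$ the largest persistence (death minus birth) among its points. In the paper $\frac{2\pi}{w_2}$ is the cycle length of a more periodic time series $f_2$, $X$ is the conditional sliding windows embedding of $f_1$ given $f_2$, and the quotients are the conditional periodicity score and its PCA version. *)

theory Defs
  imports Complex_Main "Jordan_Normal_Form.Matrix" "Jordan_Normal_Form.Char_Poly"
begin

definition eucl_dist :: "real vec \<Rightarrow> real vec \<Rightarrow> real" where
  "eucl_dist u v = sqrt (\<Sum>i<dim_vec u. (u $ i - v $ i)^2)"

(* Vietoris-Rips complex of the finite point cloud S at scale r (diameter convention):
   a simplex is a nonempty finite subset of S of diameter \<le> r. *)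
definition vr_edges :: "('a \<Rightarrow> 'a \<Rightarrow> real) \<Rightarrow> 'a set \<Rightarrow> real \<Rightarrow> 'a set set" where
  "vr_edges d S r = {e. e \<subseteq> S \<and> card e = 2 \<and> (\<forall>x\<in>e. \<forall>y\<in>e. d x y \<le> r)}"

definition vr_triangles :: "('a \<Rightarrow> 'a \<Rightarrow> real) \<Rightarrow> 'a set \<Rightarrow> real \<Rightarrow> 'a set set" where
  "vr_triangles d S r = {t. t \<subseteq> S \<and> card t = 3 \<and> (\<forall>x\<in>t. \<forall>y\<in>t. d x y \<le> r)}"

(* 1-chains with Z/2 coefficients are finite sets of edges; a 1-cycle is one with
   zero boundary, i.e. every vertex lies on an even number of its edges *)
definition is_1cycle :: "'a set set \<Rightarrow> bool" where
  "is_1cycle z \<longleftrightarrow> finite z \<and> (\<forall>v. even (card {e\<in>z. v \<in> e}))"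

(* 1-boundaries of VR_r(S) over Z/2: sums of boundaries of 2-simplices *)
definition is_1boundary :: "('a \<Rightarrow> 'a \<Rightarrow> real) \<Rightarrow> 'a set \<Rightarrow> real \<Rightarrow> 'a set set \<Rightarrow> bool" where
  "is_1boundary d S r z \<longleftrightarrow>
     (\<exists>Ts \<subseteq> vr_triangles d S r. finite Ts \<and>
        z = {e. card e = 2 \<and> odd (card {t\<in>Ts. e \<subseteq> t})})"

(* rank of H_1(VR_a(S)) \<rightarrow> H_1(VR_b(S)) (coefficients Z/2) is positive *)
definition h1_rank_pos :: "('a \<Rightarrow> 'a \<Rightarrow> real) \<Rightarrow> 'a set \<Rightarrow> real \<Rightarrow> real \<Rightarrow> bool" where
  "h1_rank_pos d S a b \<longleftrightarrow>
     (\<exists>z. z \<subseteq> vr_edges d S a \<and> is_1cycle z \<and> \<not> is_1boundary d S b z)"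

(* mp(dgm_1(VR(S))): largest persistence of a point of the 1-dimensional persistence
   diagram, expressed through the rank invariant (0 if the diagram is empty) *)
definition max_pers1 :: "('a \<Rightarrow> 'a \<Rightarrow> real) \<Rightarrow> 'a set \<Rightarrow> real" where
  "max_pers1 d S = Sup ({b - a | a b. 0 \<le> a \<and> a \<le> b \<and> h1_rank_pos d S a b} \<union> {0})"

definition sorted_eigenvalues :: "real mat \<Rightarrow> real list \<Rightarrow> bool" where
  "sorted_eigenvalues A ls \<longleftrightarrow>
     length ls = dim_row A \<and> sorted_wrt (\<ge>) ls \<and> char_poly A = (\<Prod>a\<leftarrow>ls. [:- a, 1:])"

definition top_right_singular_vectors :: "real mat \<Rightarrow> nat \<Rightarrow> real mat \<Rightarrow> bool" where
  "top_right_singular_vectors X K V \<longleftrightarrow>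
     V \<in> carrier_mat (dim_col X) K \<and> transpose_mat V * V = 1\<^sub>m K \<and>
     (\<exists>mus. sorted_eigenvalues (transpose_mat X * X) mus \<and>
        (\<forall>j<K. (transpose_mat X * X) *\<^sub>v col V j = mus ! j \<cdot>\<^sub>v col V j))"

definition row_cloud :: "real mat \<Rightarrow> real vec set" where
  "row_cloud X = {row X i | i. i < dim_row X}"

end

theory Submission
  imports Defs "Jordan_Normal_Form.Schur_Decomposition"
begin


definition s2 :: "'a \<times> 'a \<Rightarrow> 'a set" where "s2 p = {fst p, snd p}"
definition s3 :: "'a \<times> 'a \<times> 'a \<Rightarrow> 'a set" where "s3 p = {fst p, fst (snd p), snd (snd p)}"
lemma s2_simp[simp]: "s2 (x,y) = {x,y}" by (simp add: s2_def)
lemma s3_simp[simp]: "s3 (x,y,w) = {x,y,w}" by (simp add: s3_def)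

definition ech :: "('a \<times> 'a) multiset \<Rightarrow> 'a set set" where
  "ech E = {e. card e = 2 \<and> odd (count (image_mset s2 E) e)}"

definition bd3 :: "'a \<times> 'a \<times> 'a \<Rightarrow> ('a \<times> 'a) multiset" where
  "bd3 t = {#(fst t, fst (snd t)), (fst (snd t), snd (snd t)), (fst t, snd (snd t))#}"
lemma bd3_simp[simp]: "bd3 (p,q,r) = {#(p,q),(q,r),(p,r)#}" by (simp add: bd3_def)

definition fbd :: "('a \<times> 'a \<times> 'a) multiset \<Rightarrow> ('a \<times> 'a) multiset" where
  "fbd T = sum_mset (image_mset bd3 T)"
lemma fbd_empty[simp]: "fbd {#} = {#}" by (simp add: fbd_def)
lemma fbd_add[simp]: "fbd (add_mset t T) = bd3 t + fbd T" by (simp add: fbd_def)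
lemma fbd_union[simp]: "fbd (T + U) = fbd T + fbd U" by (simp add: fbd_def)

definition fcyc :: "('a \<times> 'a) multiset \<Rightarrow> bool" where
  "fcyc E \<longleftrightarrow> (\<forall>v. even (count (image_mset fst E + image_mset snd E) v))"

definition sd :: "'b set \<Rightarrow> 'b set \<Rightarrow> 'b set" where "sd A B = (A - B) \<union> (B - A)"

lemma finite_ech: "finite (ech E)"
proof -
  have "ech E \<subseteq> set_mset (image_mset s2 E)"
  proof
    fix e assume "e \<in> ech E"
    then have "odd (count (image_mset s2 E) e)" unfolding ech_def mem_Collect_eq by blast
    then have "count (image_mset s2 E) e \<noteq> 0" by (metis even_zero)
    then show "e \<in># image_mset s2 E" using not_in_iff by metis
  qed
  then show ?thesis by (rule finite_subset) simp
qed

lemma ech_union: "ech (E + F) = sd (ech E) (ech F)"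
  by (auto simp: ech_def sd_def)

lemma even_count_image:
  assumes "\<forall>x. even (count M x)" shows "even (count (image_mset f M) y)"
  unfolding count_image_mset using assms by (intro dvd_sum) auto

lemma ech_even: "(\<forall>e. even (count (image_mset s2 E) e)) \<Longrightarrow> ech E = {}"
  by (auto simp: ech_def)

lemma card_s2_le: "card (s2 p) \<le> 2"
  by (cases p) (simp add: card_insert_le_m1)

lemma ech_map_empty:
  assumes "ech E = {}" shows "ech (image_mset (map_prod f f) E) = {}"
proof -
  have im: "image_mset s2 (image_mset (map_prod f f) E) = image_mset ((`) f) (image_mset s2 E)"
    by (simp add: multiset.map_comp comp_def) (rule image_mset_cong, auto simp: s2_def)
  have "even (count (image_mset ((`) f) (image_mset s2 E)) e')" if c: "card e' = 2" for e'
  proof -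
    have "even (count (image_mset s2 E) e)" if "e \<in> (`) f -` {e'} \<inter> set_mset (image_mset s2 E)" for e
    proof -
      from that obtain p where p: "e = s2 p" "f ` e = e'" by auto
      have "finite e" using p by (simp add: s2_def)
      then have "2 \<le> card e" using c p card_image_le[of e f] by simp
      moreover have "card e \<le> 2" using p card_s2_le by simp
      ultimately have "card e = 2" by simp
      then show ?thesis using assms unfolding ech_def by auto
    qed
    then show ?thesis by (simp only: count_image_mset) (rule dvd_sum, blast)
  qed
  then show ?thesis unfolding ech_def im by auto
qed

lemma sd_empty_eq: "sd A B = {} \<Longrightarrow> A = B" by (auto simp: sd_def)

lemma ech_map_cong:
  assumes "ech E1 = ech E2"
  shows "ech (image_mset (map_prod f f) E1) = ech (image_mset (map_prod f f) E2)"
proof -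
  have "ech (E1 + E2) = {}" using assms by (simp add: ech_union sd_def)
  then have "ech (image_mset (map_prod f f) (E1 + E2)) = {}" by (rule ech_map_empty)
  then show ?thesis by (simp add: ech_union sd_empty_eq)
qed

lemma fcyc_map: "fcyc E \<Longrightarrow> fcyc (image_mset (map_prod f f) E)"
proof -
  assume "fcyc E"
  have "image_mset fst (image_mset (map_prod f f) E) + image_mset snd (image_mset (map_prod f f) E)
     = image_mset f (image_mset fst E + image_mset snd E)"
    by (simp add: multiset.map_comp comp_def)
  then show ?thesis using \<open>fcyc E\<close> unfolding fcyc_def by (metis even_count_image)
qed

lemma fbd_map: "fbd (image_mset (map_prod f (map_prod f f)) T) = image_mset (map_prod f f) (fbd T)"
  by (induction T) auto


lemma card_sd_single:
  assumes "finite A" shows "odd (card (sd A {t})) \<longleftrightarrow> even (card A)"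
proof (cases "t \<in> A")
  case True
  then have "sd A {t} = A - {t}" by (auto simp: sd_def)
  moreover have "card A = Suc (card (A - {t}))" using True assms
    by (metis card_Suc_Diff1)
  ultimately show ?thesis by simp
next
  case False
  then have "sd A {t} = insert t A" by (auto simp: sd_def)
  then show ?thesis using False assms by simp
qed

lemma ech_add: "ech (add_mset (x,y) E) = (if x = y then ech E else sd (ech E) {{x,y}})"
  by (auto simp: ech_def sd_def)

lemma ech_cycle_parity:
  "even (card {e\<in>ech E. v\<in>e} + count (image_mset fst E + image_mset snd E) v)"
proof (induction E)
  case empty
  then show ?case by (simp add: ech_def)
next
  case (add p E)
  obtain x y where p: "p = (x,y)" by (cases p)
  show ?case
  proof (cases "x = y")
    case True
    then show ?thesis using add p by (simp add: ech_add)
  next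
    case False
    have fin: "finite {e\<in>ech E. v\<in>e}" by (rule finite_subset[OF _ finite_ech[of E]]) auto
    have eq: "{e\<in>ech (add_mset p E). v\<in>e} = (if v \<in> {x,y} then sd {e\<in>ech E. v\<in>e} {{x,y}} else {e\<in>ech E. v\<in>e})"
      using False p by (auto simp: ech_add sd_def)
    show ?thesis
    proof (cases "v \<in> {x,y}")
      case True
      then have c: "count (image_mset fst (add_mset p E) + image_mset snd (add_mset p E)) v
         = Suc (count (image_mset fst E + image_mset snd E) v)" using False p by auto
      have e2: "{e\<in>ech (add_mset p E). v\<in>e} = sd {e\<in>ech E. v\<in>e} {{x,y}}" using eq True by simp
      have h: "odd (card (sd {e\<in>ech E. v\<in>e} {{x,y}})) = even (card {e\<in>ech E. v\<in>e})"
        by (rule card_sd_single[OF fin])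
      show ?thesis unfolding c e2 using h add.IH by presburger
    next
      case f2: False
      then have "count (image_mset fst (add_mset p E) + image_mset snd (add_mset p E)) v
         = count (image_mset fst E + image_mset snd E) v" using False p by auto
      then show ?thesis using eq f2 add by simp
    qed
  qed
qed

definition diam_le :: "('a \<Rightarrow> 'a \<Rightarrow> real) \<Rightarrow> 'a set \<Rightarrow> real \<Rightarrow> bool" where
  "diam_le d t r \<longleftrightarrow> (\<forall>u\<in>t. \<forall>w\<in>t. d u w \<le> r)"

lemma formal_cyc:
  assumes "fcyc E" "\<forall>p\<in>#E. s2 p \<subseteq> S \<and> diam_le d (s2 p) a"
  shows "ech E \<subseteq> vr_edges d S a" "is_1cycle (ech E)"
proof -
  show "ech E \<subseteq> vr_edges d S a"
  proof
    fix e assume e: "e \<in> ech E"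
    then have "odd (count (image_mset s2 E) e)" unfolding ech_def mem_Collect_eq by blast
    then have "count (image_mset s2 E) e \<noteq> 0" by (metis even_zero)
    then have "e \<in># image_mset s2 E" using not_in_iff by metis
    then obtain p where "p \<in># E" "e = s2 p" by auto
    then show "e \<in> vr_edges d S a" using assms(2) e unfolding vr_edges_def diam_le_def ech_def by auto
  qed
  show "is_1cycle (ech E)" unfolding is_1cycle_def
  proof (intro conjI allI)
    show "finite (ech E)" by (rule finite_ech)
    fix v show "even (card {e \<in> ech E. v \<in> e})"
      using ech_cycle_parity[of E v] assms(1) unfolding fcyc_def by auto
  qed
qed

lemma cyc_formal:
  assumes "z \<subseteq> vr_edges d S a" "is_1cycle z"
  shows "\<exists>E. fcyc E \<and> ech E = z \<and> (\<forall>p\<in>#E. s2 p \<subseteq> S \<and> diam_le d (s2 p) a)"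
proof -
  define \<pi> where "\<pi> e = (SOME p. fst p \<noteq> snd p \<and> s2 p = e)" for e :: "'a set"
  have fin: "finite z" using assms(2) by (simp add: is_1cycle_def)
  have pi: "fst (\<pi> e) \<noteq> snd (\<pi> e) \<and> s2 (\<pi> e) = e" if "e \<in> z" for e
  proof -
    have "card e = 2" using that assms(1) by (auto simp: vr_edges_def)
    then obtain x y where "x \<noteq> y" "e = {x,y}" by (meson card_2_iff)
    then have "\<exists>p. fst p \<noteq> snd p \<and> s2 p = e" by (intro exI[of _ "(x,y)"]) auto
    then show ?thesis unfolding \<pi>_def by (rule someI_ex)
  qed
  define E where "E = image_mset \<pi> (mset_set z)"
  have im: "image_mset s2 E = mset_set z"
  proof -
    have "image_mset s2 E = image_mset id (mset_set z)"
      unfolding E_def multiset.map_comp using pi fin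
      by (intro image_mset_cong) (auto simp: finite_set_mset_mset_set)
    then show ?thesis by simp
  qed
  have ech: "ech E = z"
    unfolding ech_def im using fin assms(1) by (auto simp: count_mset_set' vr_edges_def split: if_splits)
  have "fcyc E" unfolding fcyc_def
  proof
    fix v
    have "even (card {e\<in>z. v\<in>e})" using assms(2) by (simp add: is_1cycle_def)
    then show "even (count (image_mset fst E + image_mset snd E) v)"
      using ech_cycle_parity[of E v] ech by auto
  qed
  moreover have "\<forall>p\<in>#E. s2 p \<subseteq> S \<and> diam_le d (s2 p) a"
    using pi fin assms(1) unfolding E_def vr_edges_def diam_le_def by auto
  ultimately show ?thesis using ech by blast
qed


lemma bd3_parity:
  assumes "card e = 2"
  shows "odd (count (image_mset s2 (bd3 (p,q,r))) e) \<longleftrightarrow> (card {p,q,r} = 3 \<and> e \<subseteq> {p,q,r})"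
proof -
  obtain a b where e: "a \<noteq> b" "e = {a,b}" using assms by (meson card_2_iff)
  show ?thesis
    using e by (cases "p=q"; cases "q=r"; cases "p=r") (auto simp: doubleton_eq_iff card_insert_if)
qed


definition Fs :: "'a set \<Rightarrow> ('a \<times> 'a \<times> 'a) multiset \<Rightarrow> 'a set set" where
  "Fs e T = {t. card t = 3 \<and> e \<subseteq> t \<and> odd (count (image_mset s3 T) t)}"

lemma finite_Fs: "finite (Fs e T)"
proof -
  have "Fs e T \<subseteq> set_mset (image_mset s3 T)"
  proof
    fix t assume "t \<in> Fs e T"
    then have "odd (count (image_mset s3 T) t)" unfolding Fs_def mem_Collect_eq by blast
    then have "count (image_mset s3 T) t \<noteq> 0" by (metis even_zero)
    then show "t \<in># image_mset s3 T" using not_in_iff by metis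
  qed
  then show ?thesis by (rule finite_subset) simp
qed

lemma Fs_add: "Fs e (add_mset \<tau> T) = (if card (s3 \<tau>) = 3 \<and> e \<subseteq> s3 \<tau> then sd (Fs e T) {s3 \<tau>} else Fs e T)"
  by (auto simp: Fs_def sd_def)

lemma fbd_parity:
  assumes "card e = 2"
  shows "odd (count (image_mset s2 (fbd T)) e) \<longleftrightarrow> odd (card (Fs e T))"
proof (induction T)
  case empty
  then show ?case by (simp add: Fs_def)
next
  case (add \<tau> T)
  obtain p q r where t: "\<tau> = (p,q,r)" by (cases \<tau>)
  have c: "count (image_mset s2 (fbd (add_mset \<tau> T))) e =
     count (image_mset s2 (bd3 (p,q,r))) e + count (image_mset s2 (fbd T)) e" using t by simp
  have b: "odd (count (image_mset s2 (bd3 (p,q,r))) e) \<longleftrightarrow> (card {p,q,r} = 3 \<and> e \<subseteq> {p,q,r})"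
    by (rule bd3_parity[OF assms])
  show ?case
  proof (cases "card {p,q,r} = 3 \<and> e \<subseteq> {p,q,r}")
    case True
    then have F: "Fs e (add_mset \<tau> T) = sd (Fs e T) {s3 \<tau>}" unfolding t using Fs_add[of e "(p,q,r)" T] by simp
    have h: "odd (card (sd (Fs e T) {s3 \<tau>})) = even (card (Fs e T))"
      by (rule card_sd_single[OF finite_Fs])
    have b': "odd (count (image_mset s2 (bd3 (p,q,r))) e)" using b True by simp
    show ?thesis unfolding c F using h b' add.IH by presburger
  next
    case False
    then have F: "Fs e (add_mset \<tau> T) = Fs e T" unfolding t by (subst Fs_add) (simp only: s3_simp if_not_P[OF False] if_False)
    have b': "even (count (image_mset s2 (bd3 (p,q,r))) e)" using b False by simp
    show ?thesis unfolding c F using b' add.IH by presburger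
  qed
qed

lemma ech_fbd: "ech (fbd T) = {e. card e = 2 \<and> odd (card (Fs e T))}"
  unfolding ech_def using fbd_parity by blast

lemma real_bdry:
  assumes "\<forall>\<tau>\<in>#T. s3 \<tau> \<subseteq> S \<and> diam_le d (s3 \<tau>) r"
  shows "is_1boundary d S r (ech (fbd T))"
proof -
  define Ts where "Ts = {t. card t = 3 \<and> odd (count (image_mset s3 T) t)}"
  have sub: "Ts \<subseteq> set_mset (image_mset s3 T)"
  proof
    fix t assume "t \<in> Ts"
    then have "odd (count (image_mset s3 T) t)" unfolding Ts_def mem_Collect_eq by blast
    then have "count (image_mset s3 T) t \<noteq> 0" by (metis even_zero)
    then show "t \<in># image_mset s3 T" using not_in_iff by metis
  qed
  then have fin: "finite Ts" by (rule finite_subset) simp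
  have "Ts \<subseteq> vr_triangles d S r"
  proof
    fix t assume t: "t \<in> Ts"
    then obtain \<tau> where "\<tau> \<in># T" "t = s3 \<tau>" using sub by auto
    then show "t \<in> vr_triangles d S r" using assms t unfolding vr_triangles_def Ts_def diam_le_def by auto
  qed
  moreover have "ech (fbd T) = {e. card e = 2 \<and> odd (card {t\<in>Ts. e \<subseteq> t})}"
  proof -
    have "Fs e T = {t\<in>Ts. e \<subseteq> t}" for e unfolding Fs_def Ts_def by auto
    then show ?thesis by (simp add: ech_fbd)
  qed
  ultimately show ?thesis unfolding is_1boundary_def using fin by blast
qed

lemma card3_obtain: assumes "card t = 3" shows "\<exists>\<tau>. s3 \<tau> = t"
proof -
  from assms obtain x y w where "t = {x,y,w}" by (metis card_3_iff)
  then show ?thesis by (intro exI[of _ "(x,y,w)"]) simp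
qed

lemma bdry_formal:
  assumes "is_1boundary d S r z"
  shows "\<exists>T. (\<forall>\<tau>\<in>#T. s3 \<tau> \<subseteq> S \<and> diam_le d (s3 \<tau>) r) \<and> z = ech (fbd T)"
proof -
  obtain Ts where Ts: "Ts \<subseteq> vr_triangles d S r" "finite Ts"
    "z = {e. card e = 2 \<and> odd (card {t\<in>Ts. e \<subseteq> t})}"
    using assms unfolding is_1boundary_def by blast
  define \<rho> where "\<rho> t = (SOME \<tau>. s3 \<tau> = t)" for t :: "'a set"
  have rho: "s3 (\<rho> t) = t" if "t \<in> Ts" for t
  proof -
    have "card t = 3" using that Ts(1) by (auto simp: vr_triangles_def)
    then show ?thesis unfolding \<rho>_def by (rule someI_ex[OF card3_obtain])
  qed
  define T where "T = image_mset \<rho> (mset_set Ts)"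
  have im: "image_mset s3 T = mset_set Ts"
  proof -
    have "image_mset s3 T = image_mset id (mset_set Ts)"
      unfolding T_def multiset.map_comp using rho Ts(2)
      by (intro image_mset_cong) (auto simp: finite_set_mset_mset_set)
    then show ?thesis by simp
  qed
  have "ech (fbd T) = z"
  proof -
    have "Fs e T = {t\<in>Ts. e \<subseteq> t}" for e
      unfolding Fs_def im using Ts(1,2) by (auto simp: count_mset_set' vr_triangles_def split: if_splits)
    then show ?thesis unfolding ech_fbd Ts(3) by simp
  qed
  moreover have "\<forall>\<tau>\<in>#T. s3 \<tau> \<subseteq> S \<and> diam_le d (s3 \<tau>) r"
    using rho Ts unfolding T_def vr_triangles_def diam_le_def by auto
  ultimately show ?thesis by metis
qed


lemma sd_sd: "sd (sd A B) B = A" by (auto simp: sd_def)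
lemma sd_empty: "sd A {} = A" by (auto simp: sd_def)

lemma s2_map: "s2 (map_prod f f p) = f ` s2 p" by (cases p) auto
lemma s3_map: "s3 (map_prod f (map_prod f f) p) = f ` s3 p" by (cases p) auto

lemma diam_map:
  assumes "t \<subseteq> S" "diam_le d t r" "\<forall>x\<in>S. \<forall>y\<in>S. d' (f x) (f y) \<le> d x y + \<epsilon>"
  shows "diam_le d' (f ` t) (r + \<epsilon>)"
  unfolding diam_le_def
proof (intro ballI)
  fix u w assume "u \<in> f ` t" "w \<in> f ` t"
  then obtain x y where xy: "x \<in> t" "y \<in> t" "u = f x" "w = f y" by auto
  have "d' (f x) (f y) \<le> d x y + \<epsilon>" using assms(1,3) xy by blast
  moreover have "d x y \<le> r" using assms(2) xy unfolding diam_le_def by blast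
  ultimately show "d' u w \<le> r + \<epsilon>" using xy by simp
qed

lemma prism_fbd:
  "fbd (sum_mset (image_mset (\<lambda>(x,y). {#(x,y,h y),(x,h x,h y)#}) E)) =
     (E + image_mset (map_prod h h) E) +
     (image_mset (\<lambda>v. (v, h v)) (image_mset fst E + image_mset snd E)
       + image_mset (\<lambda>(x,y). (x, h y)) E + image_mset (\<lambda>(x,y). (x, h y)) E)"
proof (induction E)
  case empty then show ?case by simp
next
  case (add p E)
  obtain x y where p: "p = (x,y)" by (cases p)
  show ?case unfolding p image_mset_add_mset sum_mset.add_mset fbd_union add.IH
    by (rule multiset_eqI) simp
qed

lemma cone_fbd:
  "fbd (image_mset (\<lambda>(x,y). (v0,x,y)) E) =
     E + (image_mset (\<lambda>v. (v0, v)) (image_mset fst E + image_mset snd E))"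
proof (induction E)
  case empty then show ?case by simp
next
  case (add p E)
  obtain x y where p: "p = (x,y)" by (cases p)
  show ?case unfolding p image_mset_add_mset fbd_add add.IH
    by (rule multiset_eqI) simp
qed

lemma ech_double: "ech (M + M) = {}"
  by (rule ech_even) simp

lemma ech_fcyc_image: "fcyc E \<Longrightarrow> ech (image_mset \<phi> (image_mset fst E + image_mset snd E)) = {}"
  unfolding fcyc_def
  by (rule ech_even, simp only: multiset.map_comp, intro allI even_count_image) simp

lemma cone_bdry:
  assumes "z \<subseteq> vr_edges d S a" "is_1cycle z" "\<forall>u\<in>S. \<forall>w\<in>S. d u w \<le> r"
  shows "is_1boundary d S r z"
proof -
  obtain E where E: "fcyc E" "ech E = z" "\<forall>p\<in>#E. s2 p \<subseteq> S \<and> diam_le d (s2 p) a"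
    using cyc_formal[OF assms(1,2)] by blast
  show ?thesis
  proof (cases "E = {#}")
    case True
    then have "z = ech (fbd {#})" using E by simp
    moreover have "is_1boundary d S r (ech (fbd ({#}::('a\<times>'a\<times>'a) multiset)))" by (rule real_bdry) simp
    ultimately show ?thesis by simp
  next
    case False
    then obtain p where p: "p \<in># E" by (meson multiset_nonemptyE)
    define v0 where "v0 = fst p"
    have v0: "v0 \<in> S" using E(3) p unfolding v0_def by (cases p) auto
    define C where "C = image_mset (\<lambda>(x,y). (v0,x,y)) E"
    have "ech (fbd C) = z" unfolding C_def cone_fbd ech_union ech_fcyc_image[OF E(1)] sd_empty E(2) ..
    moreover have "is_1boundary d S r (ech (fbd C))"
    proof (rule real_bdry, intro ballI)
      fix \<tau> assume "\<tau> \<in># C"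
      then obtain x y where xy: "(x,y) \<in># E" "\<tau> = (v0,x,y)" unfolding C_def by auto
      then have "x \<in> S" "y \<in> S" using E(3) by auto
      then show "s3 \<tau> \<subseteq> S \<and> diam_le d (s3 \<tau>) r" using xy(2) v0 assms(3) unfolding diam_le_def by auto
    qed
    ultimately show ?thesis by simp
  qed
qed

lemma interleave_A:
  assumes fS: "\<forall>x\<in>S. f x \<in> S'" and gS: "\<forall>y\<in>S'. g y \<in> S" and fg: "\<forall>y\<in>S'. f (g y) = y"
    and dist1: "\<forall>x\<in>S. \<forall>y\<in>S. d' (f x) (f y) \<le> d x y + \<epsilon>"
    and dist2: "\<forall>x\<in>S. \<forall>y\<in>S. d x y \<le> d' (f x) (f y) + \<epsilon>"
    and hr: "h1_rank_pos d S a b" and ab: "a + 2 * \<epsilon> \<le> b" and eps: "0 \<le> \<epsilon>"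
  shows "h1_rank_pos d' S' (a + \<epsilon>) (b - \<epsilon>)"
proof -
  obtain z where z: "z \<subseteq> vr_edges d S a" "is_1cycle z" "\<not> is_1boundary d S b z"
    using hr unfolding h1_rank_pos_def by blast
  obtain E where E: "fcyc E" "ech E = z" "\<forall>p\<in>#E. s2 p \<subseteq> S \<and> diam_le d (s2 p) a"
    using cyc_formal[OF z(1,2)] by blast
  define E' where "E' = image_mset (map_prod f f) E"
  have E'c: "\<forall>p\<in>#E'. s2 p \<subseteq> S' \<and> diam_le d' (s2 p) (a + \<epsilon>)"
  proof
    fix p' assume "p' \<in># E'"
    then obtain p where p: "p \<in># E" "p' = map_prod f f p" unfolding E'_def by auto
    have "diam_le d' (f ` s2 p) (a + \<epsilon>)"
      by (rule diam_map[of _ S]) (use E(3) p dist1 in auto)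
    then show "s2 p' \<subseteq> S' \<and> diam_le d' (s2 p') (a + \<epsilon>)"
      using E(3) fS p by (auto simp: s2_map)
  qed
  have fE': "fcyc E'" unfolding E'_def by (rule fcyc_map[OF E(1)])
  have g_dist: "d (g u) (g w) \<le> d' u w + \<epsilon>" if "u \<in> S'" "w \<in> S'" for u w
  proof -
    have "d (g u) (g w) \<le> d' (f (g u)) (f (g w)) + \<epsilon>" using dist2 gS that by blast
    then show ?thesis using fg that by simp
  qed
  have nb: "\<not> is_1boundary d' S' (b - \<epsilon>) (ech E')"
  proof
    assume "is_1boundary d' S' (b - \<epsilon>) (ech E')"
    then obtain T' where T': "\<forall>\<tau>\<in>#T'. s3 \<tau> \<subseteq> S' \<and> diam_le d' (s3 \<tau>) (b - \<epsilon>)" "ech E' = ech (fbd T')"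
      using bdry_formal by blast
    define T1 where "T1 = image_mset (map_prod g (map_prod g g)) T'"
    have T1c: "\<forall>\<tau>\<in>#T1. s3 \<tau> \<subseteq> S \<and> diam_le d (s3 \<tau>) b"
    proof
      fix \<tau> assume "\<tau> \<in># T1"
      then obtain \<tau>' where t: "\<tau>' \<in># T'" "\<tau> = map_prod g (map_prod g g) \<tau>'" unfolding T1_def by auto
      have "diam_le d (g ` s3 \<tau>') (b - \<epsilon> + \<epsilon>)"
        by (rule diam_map[of _ S']) (use T' t g_dist in auto)
      then show "s3 \<tau> \<subseteq> S \<and> diam_le d (s3 \<tau>) b" using t T' gS by (auto simp: s3_map)
    qed
    have ech1: "ech (fbd T1) = ech (image_mset (map_prod g g) E')"
      unfolding T1_def fbd_map by (rule ech_map_cong) (use T' in simp)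
    define h where "h = g \<circ> f"
    define P where "P = sum_mset (image_mset (\<lambda>(x,y). {#(x,y,h y),(x,h x,h y)#}) E)"
    have hE: "image_mset (map_prod h h) E = image_mset (map_prod g g) E'"
      unfolding E'_def h_def by (simp add: multiset.map_comp map_prod.comp)
    have echP: "ech (fbd P) = sd z (ech (image_mset (map_prod g g) E'))"
      unfolding P_def prism_fbd ech_union ech_fcyc_image[OF E(1)] ech_double
      by (simp add: ech_union sd_empty E(2) hE sd_def)
    have "ech (fbd (P + T1)) = z"
      unfolding fbd_union ech_union echP ech1 sd_sd ..
    moreover have "is_1boundary d S b (ech (fbd (P + T1)))"
    proof (rule real_bdry, intro ballI)
      fix \<tau> assume "\<tau> \<in># P + T1"
      then consider "\<tau> \<in># P" | "\<tau> \<in># T1" by auto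
      then show "s3 \<tau> \<subseteq> S \<and> diam_le d (s3 \<tau>) b"
      proof cases
        case 1
        then obtain x y where xy: "(x,y) \<in># E" "\<tau> = (x,y,h y) \<or> \<tau> = (x,h x,h y)"
          unfolding P_def by auto
        have xyS: "x \<in> S" "y \<in> S" using E(3) xy(1) by auto
        have hS: "h u \<in> S" if "u \<in> S" for u using that fS gS unfolding h_def by auto
        have fh: "f (h u) = f u" if "u \<in> S" for u using that fS fg unfolding h_def by auto
        have dxy: "d u w \<le> a" if "u \<in> {x,y}" "w \<in> {x,y}" for u w
          using E(3) xy(1) that unfolding diam_le_def by auto
        have B: "d u w \<le> b \<and> d u (h w) \<le> b \<and> d (h u) w \<le> b \<and> d (h u) (h w) \<le> b"
          if "u \<in> {x,y}" "w \<in> {x,y}" for u w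
        proof -
          have uS: "u \<in> S" and wS: "w \<in> S" using that xyS by auto
          have a1: "d u w \<le> a" by (rule dxy[OF that])
          have "d' (f u) (f w) \<le> d u w + \<epsilon>" using dist1 uS wS by blast
          then have a2: "d' (f u) (f w) \<le> a + \<epsilon>" using a1 by linarith
          have "d u (h w) \<le> d' (f u) (f (h w)) + \<epsilon>" using dist2 uS hS[OF wS] by blast
          moreover have "d (h u) w \<le> d' (f (h u)) (f w) + \<epsilon>" using dist2 wS hS[OF uS] by blast
          moreover have "d (h u) (h w) \<le> d' (f (h u)) (f (h w)) + \<epsilon>" using dist2 hS[OF wS] hS[OF uS] by blast
          ultimately show ?thesis using a1 a2 fh[OF uS] fh[OF wS] ab eps
            by auto
        qed
        have sub: "s3 \<tau> \<subseteq> {x, y, h x, h y}" using xy(2) by auto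
        have "diam_le d {x, y, h x, h y} b" unfolding diam_le_def
          using B[of x x] B[of x y] B[of y x] B[of y y] by auto
        then have "diam_le d (s3 \<tau>) b" using sub unfolding diam_le_def by (meson subsetD)
        moreover have "s3 \<tau> \<subseteq> S" using sub xyS hS by auto
        ultimately show ?thesis by simp
      next
        case 2 then show ?thesis using T1c by blast
      qed
    qed
    ultimately show False using z(3) by simp
  qed
  have c: "ech E' \<subseteq> vr_edges d' S' (a + \<epsilon>)" "is_1cycle (ech E')"
    using formal_cyc[OF fE' E'c] by auto
  show ?thesis unfolding h1_rank_pos_def by (intro exI[of _ "ech E'"] conjI c nb)
qed


lemma interleave_B:
  assumes fS: "\<forall>x\<in>S. f x \<in> S'" and gS: "\<forall>y\<in>S'. g y \<in> S" and fg: "\<forall>y\<in>S'. f (g y) = y"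
    and dist1: "\<forall>x\<in>S. \<forall>y\<in>S. d' (f x) (f y) \<le> d x y + \<epsilon>"
    and dist2: "\<forall>x\<in>S. \<forall>y\<in>S. d x y \<le> d' (f x) (f y) + \<epsilon>"
    and hr: "h1_rank_pos d' S' a b"
  shows "h1_rank_pos d S (a + \<epsilon>) (b - \<epsilon>)"
proof -
  obtain z where z: "z \<subseteq> vr_edges d' S' a" "is_1cycle z" "\<not> is_1boundary d' S' b z"
    using hr unfolding h1_rank_pos_def by blast
  obtain E' where E': "fcyc E'" "ech E' = z" "\<forall>p\<in>#E'. s2 p \<subseteq> S' \<and> diam_le d' (s2 p) a"
    using cyc_formal[OF z(1,2)] by blast
  have g_dist: "\<forall>u\<in>S'. \<forall>w\<in>S'. d (g u) (g w) \<le> d' u w + \<epsilon>"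
  proof (intro ballI)
    fix u w assume that: "u \<in> S'" "w \<in> S'"
    have "d (g u) (g w) \<le> d' (f (g u)) (f (g w)) + \<epsilon>" using dist2 gS that by blast
    then show "d (g u) (g w) \<le> d' u w + \<epsilon>" using fg that by simp
  qed
  define E where "E = image_mset (map_prod g g) E'"
  have Ec: "\<forall>p\<in>#E. s2 p \<subseteq> S \<and> diam_le d (s2 p) (a + \<epsilon>)"
  proof
    fix p assume "p \<in># E"
    then obtain p' where p: "p' \<in># E'" "p = map_prod g g p'" unfolding E_def by auto
    have "diam_le d (g ` s2 p') (a + \<epsilon>)"
      by (rule diam_map[of _ S']) (use E' p g_dist in auto)
    then show "s2 p \<subseteq> S \<and> diam_le d (s2 p) (a + \<epsilon>)"
      using E'(3) gS p by (auto simp: s2_map)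
  qed
  have fE: "fcyc E" unfolding E_def by (rule fcyc_map[OF E'(1)])
  have nb: "\<not> is_1boundary d S (b - \<epsilon>) (ech E)"
  proof
    assume "is_1boundary d S (b - \<epsilon>) (ech E)"
    then obtain T where T: "\<forall>\<tau>\<in>#T. s3 \<tau> \<subseteq> S \<and> diam_le d (s3 \<tau>) (b - \<epsilon>)" "ech E = ech (fbd T)"
      using bdry_formal by blast
    define T' where "T' = image_mset (map_prod f (map_prod f f)) T"
    have T'c: "\<forall>\<tau>\<in>#T'. s3 \<tau> \<subseteq> S' \<and> diam_le d' (s3 \<tau>) b"
    proof
      fix \<tau> assume "\<tau> \<in># T'"
      then obtain \<tau>' where t: "\<tau>' \<in># T" "\<tau> = map_prod f (map_prod f f) \<tau>'" unfolding T'_def by auto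
      have "diam_le d' (f ` s3 \<tau>') (b - \<epsilon> + \<epsilon>)"
        by (rule diam_map[of _ S]) (use T t dist1 in auto)
      then show "s3 \<tau> \<subseteq> S' \<and> diam_le d' (s3 \<tau>) b" using t T fS by (auto simp: s3_map)
    qed
    have "ech (fbd T') = ech (image_mset (map_prod f f) E)"
      unfolding T'_def fbd_map by (rule ech_map_cong) (use T in simp)
    also have "image_mset (map_prod f f) E = E'"
    proof -
      have "image_mset (map_prod f f) E = image_mset id E'"
        unfolding E_def multiset.map_comp
      proof (rule image_mset_cong)
        fix p assume "p \<in># E'"
        then show "(map_prod f f \<circ> map_prod g g) p = id p" using E'(3) fg by (cases p) auto
      qed
      then show ?thesis by simp
    qed
    finally have "is_1boundary d' S' b z" using real_bdry[OF T'c] E'(2) by simp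
    then show False using z(3) by simp
  qed
  have c: "ech E \<subseteq> vr_edges d S (a + \<epsilon>)" "is_1cycle (ech E)"
    using formal_cyc[OF fE Ec] by auto
  show ?thesis unfolding h1_rank_pos_def by (intro exI[of _ "ech E"] conjI c nb)
qed

lemma h1_bound:
  assumes "h1_rank_pos d S a b" "\<forall>u\<in>S. \<forall>w\<in>S. d u w \<le> D"
  shows "b < D"
proof (rule ccontr)
  assume "\<not> b < D"
  then have "\<forall>u\<in>S. \<forall>w\<in>S. d u w \<le> b" using assms(2) by force
  then show False using assms(1) cone_bdry unfolding h1_rank_pos_def by blast
qed

definition pset :: "('a \<Rightarrow> 'a \<Rightarrow> real) \<Rightarrow> 'a set \<Rightarrow> real set" where
  "pset d S = {b - a | a b. 0 \<le> a \<and> a \<le> b \<and> h1_rank_pos d S a b} \<union> {0}"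

lemma max_pers1_pset: "max_pers1 d S = Sup (pset d S)"
  by (simp add: max_pers1_def pset_def)

lemma pset_bdd:
  assumes "\<forall>u\<in>S. \<forall>w\<in>S. d u w \<le> D"
  shows "bdd_above (pset d S)"
proof -
  have "\<forall>x\<in>pset d S. x \<le> max D 0"
    using h1_bound[OF _ assms] unfolding pset_def by fastforce
  then show ?thesis unfolding bdd_above_def by blast
qed

lemma finite_bound: "finite S \<Longrightarrow> \<exists>D. \<forall>u\<in>S. \<forall>w\<in>S. d u w \<le> (D::real)"
proof -
  assume "finite S"
  then have "finite ((\<lambda>(u,w). d u w) ` (S \<times> S))" by simp
  then obtain D where "\<forall>x\<in>(\<lambda>(u,w). d u w) ` (S \<times> S). x \<le> D"
    by (meson bdd_above_def bdd_above_finite)  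
  then show ?thesis by auto
qed

lemma sup_compare:
  assumes bdd: "bdd_above (pset d' S')" and eps: "0 \<le> \<epsilon>"
    and tr: "\<And>a b. 0 \<le> a \<Longrightarrow> a \<le> b \<Longrightarrow> h1_rank_pos d S a b \<Longrightarrow> a + 2 * \<epsilon> \<le> b
              \<Longrightarrow> h1_rank_pos d' S' (a + \<epsilon>) (b - \<epsilon>)"
  shows "Sup (pset d S) \<le> Sup (pset d' S') + 2 * \<epsilon>"
proof (rule cSup_least)
  show "pset d S \<noteq> {}" by (simp add: pset_def)
  have s0: "0 \<le> Sup (pset d' S')" using bdd by (intro cSup_upper) (auto simp: pset_def)
  fix x assume "x \<in> pset d S"
  then consider "x = 0" | a b where "x = b - a" "0 \<le> a" "a \<le> b" "h1_rank_pos d S a b"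
    unfolding pset_def by blast
  then show "x \<le> Sup (pset d' S') + 2 * \<epsilon>"
  proof cases
    case 1 then show ?thesis using s0 eps by simp
  next
    case (2 a b)
    show ?thesis
    proof (cases "a + 2 * \<epsilon> \<le> b")
      case True
      then have "(b - \<epsilon>) - (a + \<epsilon>) \<in> pset d' S'"
        using tr[OF 2(2,3,4) True] 2 eps unfolding pset_def by fastforce
      then have "(b - \<epsilon>) - (a + \<epsilon>) \<le> Sup (pset d' S')" using bdd by (rule cSup_upper)
      then show ?thesis using 2 by simp
    next
      case False then show ?thesis using s0 2 by simp
    qed
  qed
qed

theorem stability:
  assumes finS: "finite S" and finS': "finite S'"
    and fS: "\<forall>x\<in>S. f x \<in> S'" and gS: "\<forall>y\<in>S'. g y \<in> S" and fg: "\<forall>y\<in>S'. f (g y) = y"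
    and dist1: "\<forall>x\<in>S. \<forall>y\<in>S. d' (f x) (f y) \<le> d x y + \<epsilon>"
    and dist2: "\<forall>x\<in>S. \<forall>y\<in>S. d x y \<le> d' (f x) (f y) + \<epsilon>"
    and eps: "0 \<le> \<epsilon>"
  shows "\<bar>max_pers1 d S - max_pers1 d' S'\<bar> \<le> 2 * \<epsilon>"
proof -
  obtain D where D: "\<forall>u\<in>S. \<forall>w\<in>S. d u w \<le> D" using finite_bound[OF finS] by blast
  obtain D' where D': "\<forall>u\<in>S'. \<forall>w\<in>S'. d' u w \<le> D'" using finite_bound[OF finS'] by blast
  have 1: "Sup (pset d S) \<le> Sup (pset d' S') + 2 * \<epsilon>"
    by (rule sup_compare[OF pset_bdd[OF D'] eps])
       (rule interleave_A[OF fS gS fg dist1 dist2], auto simp: eps)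
  have 2: "Sup (pset d' S') \<le> Sup (pset d S) + 2 * \<epsilon>"
    by (rule sup_compare[OF pset_bdd[OF D] eps])
       (rule interleave_B[OF fS gS fg dist1 dist2], auto)
  show ?thesis unfolding max_pers1_pset using 1 2 by linarith
qed



definition tr :: "real mat \<Rightarrow> real" where
  "tr A = (\<Sum>i<dim_row A. A $$ (i,i))"

lemma tr_comm:
  assumes A: "A \<in> carrier_mat n k" and B: "B \<in> carrier_mat k n"
  shows "tr (A * B) = tr (B * A)"
proof -
  have "tr (A * B) = (\<Sum>i<n. \<Sum>j<k. A $$ (i,j) * B $$ (j,i))"
    unfolding tr_def using A B by (simp add: scalar_prod_def atLeast0LessThan)
  also have "\<dots> = (\<Sum>j<k. \<Sum>i<n. B $$ (j,i) * A $$ (i,j))"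
    by (subst sum.swap) (simp add: mult.commute)
  also have "\<dots> = tr (B * A)"
    unfolding tr_def using A B by (simp add: scalar_prod_def atLeast0LessThan)
  finally show ?thesis .
qed

lemma tr_add: "A \<in> carrier_mat n n \<Longrightarrow> B \<in> carrier_mat n n \<Longrightarrow> tr (A + B) = tr A + tr B"
  unfolding tr_def by (simp add: sum.distrib)

lemma tr_minus: "A \<in> carrier_mat n n \<Longrightarrow> B \<in> carrier_mat n n \<Longrightarrow> tr (A - B) = tr A - tr B"
  unfolding tr_def by (simp add: sum_subtractf)

lemma tr_upper_sq:
  assumes B: "B \<in> carrier_mat n n" and ut: "upper_triangular B"
  shows "tr (B * B) = (\<Sum>i<n. (B $$ (i,i))^2)"
proof -
  have "tr (B * B) = (\<Sum>i<n. \<Sum>j<n. B $$ (i,j) * B $$ (j,i))"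
    unfolding tr_def using B by (simp add: scalar_prod_def atLeast0LessThan)
  also have "\<dots> = (\<Sum>i<n. \<Sum>j<n. if j = i then (B $$ (i,i))^2 else 0)"
  proof (intro sum.cong refl)
    fix i j assume i: "i \<in> {..<n}" and j: "j \<in> {..<n}"
    show "B $$ (i,j) * B $$ (j,i) = (if j = i then (B $$ (i,i))^2 else 0)"
    proof (cases "j < i")
      case True then show ?thesis using ut B i by (simp add: upper_triangularD)
    next
      case False
      show ?thesis
      proof (cases "j = i")
        case True then show ?thesis by (simp add: power2_eq_square)
      next
        case False
        then have "i < j" using \<open>\<not> j < i\<close> by simp
        then show ?thesis using ut B j False by (simp add: upper_triangularD)
      qed
    qed
  qed
  also have "\<dots> = (\<Sum>i<n. (B $$ (i,i))^2)" by simp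
  finally show ?thesis .
qed

lemma tr_sq_eigen:
  assumes G: "G \<in> carrier_mat n n" and cp: "char_poly G = (\<Prod>a\<leftarrow>ls. [:- a, 1:])"
  shows "tr (G * G) = (\<Sum>i<n. (ls ! i)^2)"
proof -
  obtain B P Q where sd: "schur_decomposition G ls = (B,P,Q)" by (cases "schur_decomposition G ls") auto
  from schur_decomposition[OF G cp sd]
  have sim: "similar_mat_wit G B P Q" and ut: "upper_triangular B" and dg: "diag_mat B = ls" by auto
  from similar_mat_witD2[OF G sim] have
    PQ: "Q * P = 1\<^sub>m n" and GPBQ: "G = P * B * Q" and
    B: "B \<in> carrier_mat n n" and P: "P \<in> carrier_mat n n" and Q: "Q \<in> carrier_mat n n" by auto
  have "G * G = P * (B * B * Q)"
  proof -
    have "G * G = P * B * Q * (P * B * Q)" using GPBQ by simp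
    also have "\<dots> = P * (B * (Q * P) * B * Q)" using B P Q by (simp add: assoc_mult_mat[of _ n n _ n _ n])
    also have "\<dots> = P * (B * B * Q)" using PQ B by simp
    finally show ?thesis .
  qed
  then have "tr (G * G) = tr (B * B * Q * P)" using tr_comm[OF P, of "B * B * Q"] B Q
    by (simp add: assoc_mult_mat[of _ n n _ n _ n])
  also have "\<dots> = tr (B * B)" using PQ B P Q by (simp add: assoc_mult_mat[of _ n n _ n _ n])
  also have "\<dots> = (\<Sum>i<n. (B $$ (i,i))^2)" by (rule tr_upper_sq[OF B ut])
  also have "\<dots> = (\<Sum>i<n. (ls ! i)^2)"
    using dg B by (intro sum.cong refl) (auto simp: diag_mat_def)
  finally show ?thesis .
qed


lemma cpm_prod:
  assumes X: "X \<in> carrier_mat n m" and Y: "Y \<in> carrier_mat m n"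
  shows "char_poly_matrix (X * Y) = [:0,1:] \<cdot>\<^sub>m 1\<^sub>m n - map_mat (\<lambda>a. [:a:]) X * map_mat (\<lambda>a. [:a:]) Y"
  apply (rule eq_matI)
  using X Y by (auto simp: char_poly_matrix_def scalar_prod_def mult_to_poly sum_to_poly mult.commute)

lemma sylvester_cp:
  fixes X :: "real mat"
  assumes X: "X \<in> carrier_mat n m"
  shows "char_poly (X * X\<^sup>T) * [:0,1:]^m = [:0,1:]^n * char_poly (X\<^sup>T * X)"
proof -
  let ?x = "[:0,1:] :: real poly"
  define Xp where "Xp = map_mat (\<lambda>a. [:a:]) X"
  define Xt where "Xt = map_mat (\<lambda>a. [:a:]) X\<^sup>T"
  have Xp: "Xp \<in> carrier_mat n m" and Xt: "Xt \<in> carrier_mat m n" using X by (auto simp: Xp_def Xt_def)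
  have cG: "char_poly (X * X\<^sup>T) = det (?x \<cdot>\<^sub>m 1\<^sub>m n - Xp * Xt)"
    unfolding char_poly_def Xp_def Xt_def using X by (subst cpm_prod[of _ n m]) auto
  have cA: "char_poly (X\<^sup>T * X) = det (?x \<cdot>\<^sub>m 1\<^sub>m m - Xt * Xp)"
    unfolding char_poly_def Xp_def Xt_def using X by (subst cpm_prod[of _ m n]) auto
  define M1 where "M1 = four_block_mat (?x \<cdot>\<^sub>m 1\<^sub>m n) Xp Xt (1\<^sub>m m)"
  define M2 where "M2 = four_block_mat (1\<^sub>m n) Xp Xt (?x \<cdot>\<^sub>m 1\<^sub>m m)"
  define L where "L = four_block_mat (1\<^sub>m n) (- Xp) (0\<^sub>m m n) (1\<^sub>m m)"
  define R where "R = four_block_mat (1\<^sub>m n) (0\<^sub>m n m) (- Xt) (1\<^sub>m m)"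
  define D1 where "D1 = four_block_mat (?x \<cdot>\<^sub>m 1\<^sub>m n) (0\<^sub>m n m) (0\<^sub>m m n) (1\<^sub>m m)"
  define D2 where "D2 = four_block_mat (1\<^sub>m n) (0\<^sub>m n m) (0\<^sub>m m n) (?x \<cdot>\<^sub>m 1\<^sub>m m)"
  have cM1: "M1 \<in> carrier_mat (n+m) (n+m)" unfolding M1_def using Xp Xt by auto
  have cM2: "M2 \<in> carrier_mat (n+m) (n+m)" unfolding M2_def using Xp Xt by auto
  have cL: "L \<in> carrier_mat (n+m) (n+m)" unfolding L_def using Xp Xt by auto
  have cR: "R \<in> carrier_mat (n+m) (n+m)" unfolding R_def using Xp Xt by auto
  have cD1: "D1 \<in> carrier_mat (n+m) (n+m)" unfolding D1_def by auto
  have cD2: "D2 \<in> carrier_mat (n+m) (n+m)" unfolding D2_def by auto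
  have dL: "det L = 1" unfolding L_def
    by (subst det_four_block_mat_lower_left_zero[of _ n _ m]) (use Xp in auto)
  have dR: "det R = 1" unfolding R_def
    by (subst det_four_block_mat_upper_right_zero[of _ n _ m]) (use Xt in auto)
  have dD1: "det D1 = ?x ^ n" unfolding D1_def
    by (subst det_four_block_mat_upper_right_zero[of _ n _ m]) auto
  have dD2: "det D2 = ?x ^ m" unfolding D2_def
    by (subst det_four_block_mat_upper_right_zero[of _ n _ m]) auto
  have LM1: "L * M1 = four_block_mat (?x \<cdot>\<^sub>m 1\<^sub>m n - Xp * Xt) (0\<^sub>m n m) Xt (1\<^sub>m m)"
    unfolding L_def M1_def using Xp Xt
    by (subst mult_four_block_mat[of _ n n _ m _ m]) (auto simp: minus_add_uminus_mat[symmetric, of _ n n])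
  have "det (L * M1) = det (?x \<cdot>\<^sub>m 1\<^sub>m n - Xp * Xt)" unfolding LM1
    by (subst det_four_block_mat_upper_right_zero[of _ n _ m]) (use Xp Xt in auto)
  then have dM1: "det M1 = char_poly (X * X\<^sup>T)" using det_mult[OF cL cM1] dL cG by simp
  have RM2: "R * M2 = four_block_mat (1\<^sub>m n) Xp (0\<^sub>m m n) (?x \<cdot>\<^sub>m 1\<^sub>m m - Xt * Xp)"
    unfolding R_def M2_def using Xp Xt
    by (subst mult_four_block_mat[of _ n n _ m _ m]) (auto simp: minus_add_uminus_mat[symmetric, of _ m m] add.commute)
  have "det (R * M2) = det (?x \<cdot>\<^sub>m 1\<^sub>m m - Xt * Xp)" unfolding RM2
    by (subst det_four_block_mat_lower_left_zero[of _ n _ m]) (use Xp Xt in auto)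
  then have dM2: "det M2 = char_poly (X\<^sup>T * X)" using det_mult[OF cR cM2] dR cA by simp
  have "M1 * D2 = D1 * M2"
    unfolding M1_def M2_def D1_def D2_def using Xp Xt
    by (subst mult_four_block_mat[of _ n n _ m _ m], auto, subst mult_four_block_mat[of _ n n _ m _ m], auto
        simp: mult_smult_distrib[of _ n m _ m] mult_smult_assoc_mat[of _ n n _ m])
  then have "det M1 * det D2 = det D1 * det M2" using det_mult[OF cM1 cD2] det_mult[OF cD1 cM2] by simp
  then show ?thesis using dM1 dM2 dD1 dD2 by simp
qed


lemma self_scalar_pos:
  fixes v :: "real vec"
  assumes "v \<in> carrier_vec n" "v \<noteq> 0\<^sub>v n"
  shows "v \<bullet> v > 0"
proof -
  have ge: "v \<bullet> v \<ge> 0" unfolding scalar_prod_def by (intro sum_nonneg) simp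
  have "v \<bullet> v \<noteq> 0"
  proof
    assume "v \<bullet> v = 0"
    then have "(\<Sum>i\<in>{0..<n}. v $ i * v $ i) = 0" using assms(1) by (simp add: scalar_prod_def)
    then have "\<forall>i\<in>{0..<n}. v $ i * v $ i = 0" by (subst (asm) sum_nonneg_eq_0_iff) auto
    then have "v = 0\<^sub>v n" using assms(1) by (intro eq_vecI) auto
    then show False using assms(2) by simp
  qed
  then show ?thesis using ge by simp
qed

lemma gram_eig_nonneg:
  fixes X :: "real mat"
  assumes X: "X \<in> carrier_mat n m" and cp: "char_poly (X * X\<^sup>T) = (\<Prod>a\<leftarrow>ls. [:- a, 1:])"
    and a: "a \<in> set ls"
  shows "a \<ge> 0"
proof -
  have G: "X * X\<^sup>T \<in> carrier_mat n n" using X by simp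
  have "poly (char_poly (X * X\<^sup>T)) a = 0" unfolding cp using a by (rule linear_poly_root)
  then have "eigenvalue (X * X\<^sup>T) a" using eigenvalue_root_char_poly[OF G] by simp
  then obtain v where v: "v \<in> carrier_vec n" "v \<noteq> 0\<^sub>v n" "(X * X\<^sup>T) *\<^sub>v v = a \<cdot>\<^sub>v v"
    unfolding eigenvalue_def eigenvector_def using G by auto
  have "v \<bullet> ((X * X\<^sup>T) *\<^sub>v v) = (X\<^sup>T *\<^sub>v v) \<bullet> (X\<^sup>T *\<^sub>v v)"
    using X v(1) by (simp add: transpose_vec_mult_scalar[of X n m])
  also have "\<dots> \<ge> 0" unfolding scalar_prod_def by (intro sum_nonneg) simp
  finally have "a * (v \<bullet> v) \<ge> 0" using v by simp
  moreover have "v \<bullet> v > 0" by (rule self_scalar_pos[OF v(1,2)])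
  ultimately show ?thesis by (simp add: zero_le_mult_iff)
qed

lemma order_linear_prod: "Polynomial.order c (\<Prod>a\<leftarrow>L. [:- a, 1:]) = count (mset L) (c::real)"
proof -
  have "Polynomial.order c (\<Prod>a\<leftarrow>L. [:- a, 1:]) = sum_list (map (Polynomial.order c) (map (\<lambda>a. [:- a, 1:]) L))"
    by (subst order_prod_list) auto
  also have "\<dots> = count (mset L) c"
    by (induction L) (auto simp: order_linear')
  finally show ?thesis .
qed

lemma sorted_desc_eq:
  fixes L1 L2 :: "real list"
  assumes "sorted_wrt (\<ge>) L1" "sorted_wrt (\<ge>) L2" "mset L1 = mset L2"
  shows "L1 = L2"
proof -
  have s1: "sorted (rev L1)" and s2: "sorted (rev L2)" using assms(1,2) by (simp_all add: sorted_wrt_rev)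
  have "mset (rev L1) = mset (rev L2)" using assms(3) by simp
  then have "sort (rev L2) = rev L1" using s1 by (intro properties_for_sort) auto
  moreover have "sort (rev L2) = rev L2" using s2 by (rule sorted_sort_id)
  ultimately show ?thesis by simp
qed

lemma eig_lists:
  fixes X :: "real mat"
  assumes X: "X \<in> carrier_mat n m"
    and lams: "sorted_eigenvalues (X * X\<^sup>T) lams" and mus: "sorted_eigenvalues (X\<^sup>T * X) mus"
  shows "lams @ replicate m 0 = mus @ replicate n 0" "length lams = n" "length mus = m"
    "\<forall>a\<in>set lams. a \<ge> 0" "\<forall>a\<in>set mus. a \<ge> 0"
proof -
  show ln: "length lams = n" using lams X unfolding sorted_eigenvalues_def by simp
  show lm: "length mus = m" using mus X unfolding sorted_eigenvalues_def by simp
  have cpG: "char_poly (X * X\<^sup>T) = (\<Prod>a\<leftarrow>lams. [:- a, 1:])" using lams unfolding sorted_eigenvalues_def by simp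
  have cpA: "char_poly (X\<^sup>T * (X\<^sup>T)\<^sup>T) = (\<Prod>a\<leftarrow>mus. [:- a, 1:])" using mus unfolding sorted_eigenvalues_def by simp
  show nl: "\<forall>a\<in>set lams. a \<ge> 0" using gram_eig_nonneg[OF X cpG] by blast
  have Xt: "X\<^sup>T \<in> carrier_mat m n" using X by simp
  show nm: "\<forall>a\<in>set mus. a \<ge> 0" using gram_eig_nonneg[OF Xt cpA] by blast
  have rep: "(\<Prod>a\<leftarrow>replicate k (0::real). [:- a, 1:]) = [:0,1:]^k" for k
    by (induction k) auto
  have "(\<Prod>a\<leftarrow>lams @ replicate m 0. [:- a, 1:]) = char_poly (X * X\<^sup>T) * [:0,1:]^m"
    unfolding cpG by (simp add: rep)
  also have "\<dots> = [:0,1:]^n * char_poly (X\<^sup>T * X)" by (rule sylvester_cp[OF X])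
  also have "\<dots> = (\<Prod>a\<leftarrow>mus @ replicate n 0. [:- a, 1:])"
    using cpA by (simp add: rep mult.commute)
  finally have eq: "(\<Prod>a\<leftarrow>lams @ replicate m 0. [:- a, 1:]) = (\<Prod>a\<leftarrow>mus @ replicate n 0. [:- a, 1:])" .
  have rs: "sorted_wrt (\<ge>) (replicate k (0::real))" for k by (induction k) auto
  have "mset (lams @ replicate m 0) = mset (mus @ replicate n 0)"
  proof (rule multiset_eqI)
    fix c :: real
    show "count (mset (lams @ replicate m 0)) c = count (mset (mus @ replicate n 0)) c"
      using arg_cong[OF eq, of "Polynomial.order c"] by (simp only: order_linear_prod)
  qed
  moreover have "sorted_wrt (\<ge>) (lams @ replicate m 0)"
    using lams nl rs unfolding sorted_eigenvalues_def by (auto simp: sorted_wrt_append)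
  moreover have "sorted_wrt (\<ge>) (mus @ replicate n 0)"
    using mus nm rs unfolding sorted_eigenvalues_def by (auto simp: sorted_wrt_append)
  ultimately show "lams @ replicate m 0 = mus @ replicate n 0" by (intro sorted_desc_eq)
qed


lemma tr_sym:
  assumes P: "P \<in> carrier_mat n n" and Q: "Q \<in> carrier_mat n n" and sQ: "Q\<^sup>T = Q"
  shows "tr (P * Q) = (\<Sum>a<n. \<Sum>b<n. P $$ (a,b) * Q $$ (a,b))"
proof -
  have "tr (P * Q) = (\<Sum>a<n. \<Sum>b<n. P $$ (a,b) * Q $$ (b,a))"
    unfolding tr_def using P Q by (simp add: scalar_prod_def atLeast0LessThan)
  also have "\<dots> = (\<Sum>a<n. \<Sum>b<n. P $$ (a,b) * Q $$ (a,b))"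
  proof (intro sum.cong refl)
    fix a b assume "a \<in> {..<n}" "b \<in> {..<n}"
    then have "Q $$ (b,a) = Q\<^sup>T $$ (a,b)" using Q by simp
    then show "P $$ (a,b) * Q $$ (b,a) = P $$ (a,b) * Q $$ (a,b)" using sQ by simp
  qed
  finally show ?thesis .
qed

lemma frob_C:
  fixes X V :: "real mat"
  assumes X: "X \<in> carrier_mat n m" and V: "V \<in> carrier_mat m K" and VV: "V\<^sup>T * V = 1\<^sub>m K"
    and eig: "\<forall>j<K. (X\<^sup>T * X) *\<^sub>v col V j = mus ! j \<cdot>\<^sub>v col V j"
  shows "(\<Sum>a<n. \<Sum>b<n. ((X * X\<^sup>T - (X * V) * (X * V)\<^sup>T) $$ (a,b))^2)
          = tr ((X * X\<^sup>T) * (X * X\<^sup>T)) - (\<Sum>j<K. (mus ! j)^2)"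
proof -
  define G where "G = X * X\<^sup>T"
  define W where "W = X * V"
  define H where "H = W * W\<^sup>T"
  define A where "A = X\<^sup>T * X"
  define Dg where "Dg = mat K K (\<lambda>(i,j). if i = j then mus ! i else (0::real))"
  have Xt: "X\<^sup>T \<in> carrier_mat m n" using X by simp
  have Vt: "V\<^sup>T \<in> carrier_mat K m" using V by simp
  have G: "G \<in> carrier_mat n n" unfolding G_def using X by simp
  have W: "W \<in> carrier_mat n K" unfolding W_def using X V by simp
  have Wt: "W\<^sup>T \<in> carrier_mat K n" using W by simp
  have H: "H \<in> carrier_mat n n" unfolding H_def using W by simp
  have A: "A \<in> carrier_mat m m" unfolding A_def using X by simp
  have Dg: "Dg \<in> carrier_mat K K" unfolding Dg_def by simp
  have sG: "G\<^sup>T = G" unfolding G_def using X by (simp add: transpose_mult[of X n m])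
  have sH: "H\<^sup>T = H" unfolding H_def using W by (simp add: transpose_mult[of W n K])
  have sA: "A\<^sup>T = A" unfolding A_def using X by (simp add: transpose_mult[of _ m n])
  have sDg: "Dg\<^sup>T = Dg" unfolding Dg_def by (rule eq_matI) auto
  have AV: "A * V = V * Dg"
  proof (rule eq_matI)
    fix i j assume i: "i < dim_row (V * Dg)" and j: "j < dim_col (V * Dg)"
    then have i': "i < m" and j': "j < K" using V Dg by auto
    have "(A * V) $$ (i,j) = (A *\<^sub>v col V j) $ i" using A V i' j' by simp
    also have "\<dots> = mus ! j * V $$ (i,j)" using eig j' i' V unfolding A_def by simp
    also have "\<dots> = (V * Dg) $$ (i,j)"
    proof -
      have "(V * Dg) $$ (i,j) = (\<Sum>k\<in>{0..<K}. V $$ (i,k) * Dg $$ (k,j))"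
        using V Dg i' j' by (simp add: scalar_prod_def)
      also have "\<dots> = (\<Sum>k\<in>{0..<K}. if k = j then V $$ (i,j) * mus ! j else 0)"
        using j' unfolding Dg_def by (intro sum.cong refl) auto
      also have "\<dots> = V $$ (i,j) * mus ! j" using j' by simp
      finally show ?thesis by simp
    qed
    finally show "(A * V) $$ (i,j) = (V * Dg) $$ (i,j)" .
  qed (use A V Dg in auto)
  have WtW: "W\<^sup>T * W = Dg"
  proof -
    have "W\<^sup>T * W = V\<^sup>T * (A * V)" unfolding W_def A_def
      using X V by (simp add: transpose_mult[of X n m] assoc_mult_mat[of _ K m _ n _ K])
    also have "\<dots> = (V\<^sup>T * V) * Dg" unfolding AV using V Dg by simp
    also have "\<dots> = Dg" using VV Dg by simp
    finally show ?thesis .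
  qed
  have WtGW: "W\<^sup>T * G * W = Dg * Dg"
  proof -
    have WtX: "W\<^sup>T = V\<^sup>T * X\<^sup>T" unfolding W_def using X V by (simp add: transpose_mult[of X n m])
    have AVt: "(A * V)\<^sup>T = V\<^sup>T * A" using A V sA by (simp add: transpose_mult[of A m m])
    have l0: "W\<^sup>T * G * W = (V\<^sup>T * X\<^sup>T) * (X * X\<^sup>T) * (X * V)"
      by (subst WtX) (simp add: G_def W_def)
    have XV: "X * V \<in> carrier_mat n K" using X V by simp
    have l: "W\<^sup>T * G * W = V\<^sup>T * (X\<^sup>T * (X * (X\<^sup>T * (X * V))))"
      unfolding l0
      using X V Xt Vt XV
      by (simp add: assoc_mult_mat[of "V\<^sup>T * X\<^sup>T" K n "X * X\<^sup>T" n "X * V" K]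
                    assoc_mult_mat[of X n m "X\<^sup>T" n "X * V" K]
                    assoc_mult_mat[of "V\<^sup>T" K m "X\<^sup>T" n "X * (X\<^sup>T * (X * V))" K])
    have r: "(A * V)\<^sup>T * (A * V) = V\<^sup>T * (X\<^sup>T * (X * (X\<^sup>T * (X * V))))"
    proof -
      have r0: "(A * V)\<^sup>T * (A * V) = (V\<^sup>T * (X\<^sup>T * X)) * ((X\<^sup>T * X) * V)"
        by (subst AVt) (simp add: A_def)
      show ?thesis unfolding r0 using X V Xt Vt XV
      by (simp add: assoc_mult_mat[of "V\<^sup>T" K m "X\<^sup>T * X" m "X\<^sup>T * (X * V)" K]
                    assoc_mult_mat[of "X\<^sup>T" m n X m V K]
                    assoc_mult_mat[of "X\<^sup>T" m n X m "X\<^sup>T * (X * V)" K])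
    qed
    have "W\<^sup>T * G * W = (A * V)\<^sup>T * (A * V)" using l r by simp
    also have "\<dots> = Dg\<^sup>T * V\<^sup>T * (V * Dg)" unfolding AV
      using V Dg by (simp add: transpose_mult[of V m K])
    also have "\<dots> = Dg\<^sup>T * ((V\<^sup>T * V) * Dg)"
      using V Dg assoc_mult_mat[of "Dg\<^sup>T" K K "V\<^sup>T" m "V * Dg" K] assoc_mult_mat[of "V\<^sup>T" K m V K Dg K]
      by simp
    also have "\<dots> = Dg * Dg" using VV Dg sDg by simp
    finally show ?thesis .
  qed
  have trGH: "tr (G * H) = tr (Dg * Dg)"
  proof -
    have "tr (G * H) = tr ((G * W) * W\<^sup>T)" unfolding H_def using G W by simp
    also have "\<dots> = tr (W\<^sup>T * (G * W))" using G W by (intro tr_comm[of _ n K]) auto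
    also have "\<dots> = tr (W\<^sup>T * G * W)" using G W by simp
    finally show ?thesis using WtGW by simp
  qed
  have trHH: "tr (H * H) = tr (Dg * Dg)"
  proof -
    have "tr (H * H) = tr (W * (W\<^sup>T * (W * W\<^sup>T)))" unfolding H_def
      using W Wt assoc_mult_mat[of W n K "W\<^sup>T" n "W * W\<^sup>T" n] by simp
    also have "\<dots> = tr ((W\<^sup>T * (W * W\<^sup>T)) * W)" using W by (intro tr_comm[of _ n K]) auto
    also have "(W\<^sup>T * (W * W\<^sup>T)) * W = (W\<^sup>T * W) * (W\<^sup>T * W)"
      using W Wt assoc_mult_mat[of "W\<^sup>T" K n W K "W\<^sup>T" n] assoc_mult_mat[of "W\<^sup>T * W" K K "W\<^sup>T" n W K]
      by simp
    finally show ?thesis using WtW by simp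
  qed
  have trDD: "tr (Dg * Dg) = (\<Sum>j<K. (mus ! j)^2)"
  proof -
    have "upper_triangular Dg" unfolding Dg_def by (intro upper_triangularI) auto
    then have "tr (Dg * Dg) = (\<Sum>j<K. (Dg $$ (j,j))^2)" by (rule tr_upper_sq[OF Dg])
    then show ?thesis unfolding Dg_def by simp
  qed
  have "(\<Sum>a<n. \<Sum>b<n. ((G - H) $$ (a,b))^2)
      = (\<Sum>a<n. \<Sum>b<n. G $$ (a,b) * G $$ (a,b)) - 2 * (\<Sum>a<n. \<Sum>b<n. G $$ (a,b) * H $$ (a,b))
        + (\<Sum>a<n. \<Sum>b<n. H $$ (a,b) * H $$ (a,b))"
  proof -
    have "(\<Sum>a<n. \<Sum>b<n. ((G - H) $$ (a,b))^2)
        = (\<Sum>a<n. \<Sum>b<n. G $$ (a,b) * G $$ (a,b) - 2 * (G $$ (a,b) * H $$ (a,b)) + H $$ (a,b) * H $$ (a,b))"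
      using G H by (intro sum.cong refl) (auto simp: power2_eq_square algebra_simps)
    then show ?thesis by (simp add: sum.distrib sum_subtractf sum_distrib_left)
  qed
  also have "\<dots> = tr (G * G) - 2 * tr (G * H) + tr (H * H)"
    using tr_sym[OF G G sG] tr_sym[OF G H sH] tr_sym[OF H H sH] by simp
  finally show ?thesis unfolding G_def[symmetric] W_def[symmetric] H_def[symmetric]
    using trGH trHH trDD by simp
qed



lemma root4_sqrt: "root 4 x = sqrt (sqrt x)"
  using real_root_mult_exp[of 2 2 x] by (simp add: sqrt_def)

lemma dist_sq_expand:
  fixes u v :: "real vec"
  assumes "dim_vec u = d" "dim_vec v = d"
  shows "(eucl_dist u v)^2 = u \<bullet> u + v \<bullet> v - 2 * (u \<bullet> v)"
proof -
  have "(eucl_dist u v)^2 = (\<Sum>i<d. (u $ i - v $ i)^2)"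
    unfolding eucl_dist_def using assms by (simp add: sum_nonneg)
  also have "\<dots> = (\<Sum>i<d. u $ i * u $ i + v $ i * v $ i - 2 * (u $ i * v $ i))"
    by (intro sum.cong refl) (simp add: power2_eq_square algebra_simps)
  also have "\<dots> = u \<bullet> u + v \<bullet> v - 2 * (u \<bullet> v)"
    using assms by (simp add: scalar_prod_def sum.distrib sum_subtractf sum_distrib_left atLeast0LessThan)
  finally show ?thesis .
qed

lemma abs_diff_sqrt:
  fixes p q :: real
  assumes "0 \<le> p" "0 \<le> q"
  shows "\<bar>p - q\<bar> \<le> sqrt \<bar>p^2 - q^2\<bar>"
proof -
  have "\<bar>p - q\<bar> \<le> p + q" using assms by arith
  then have "\<bar>p - q\<bar> * \<bar>p - q\<bar> \<le> \<bar>p - q\<bar> * (p + q)" by (intro mult_left_mono) auto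
  then have "\<bar>p - q\<bar>^2 \<le> \<bar>p - q\<bar> * (p + q)" by (simp add: power2_eq_square)
  also have "\<dots> = \<bar>(p - q) * (p + q)\<bar>" using assms by (simp add: abs_mult)
  also have "(p - q) * (p + q) = p^2 - q^2" by (simp add: power2_eq_square algebra_simps)
  finally show ?thesis by (simp add: real_le_rsqrt)
qed

lemma F_le_S:
  fixes X :: "real mat"
  assumes X: "X \<in> carrier_mat N m" and Km: "K \<le> m"
    and lams: "sorted_eigenvalues (X * X\<^sup>T) lams" and mus: "sorted_eigenvalues (X\<^sup>T * X) mus"
  shows "(\<Sum>i<N. (lams ! i)^2) - (\<Sum>j<K. (mus ! j)^2) \<le> (\<Sum>i\<in>{K..<N}. (lams ! i)^2)"
proof -
  note el = eig_lists[OF X lams mus]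
  define p where "p = min K N"
  have eq: "mus ! j = lams ! j" if "j < p" for j
  proof -
    have "(lams @ replicate m 0) ! j = lams ! j" using that el(2) by (simp add: p_def nth_append)
    moreover have "(mus @ replicate N 0) ! j = mus ! j" using that el(3) Km by (simp add: p_def nth_append)
    ultimately show ?thesis using el(1) by simp
  qed
  have "(\<Sum>j<p. (lams ! j)^2) = (\<Sum>j<p. (mus ! j)^2)" using eq by simp
  also have "\<dots> \<le> (\<Sum>j<K. (mus ! j)^2)" by (intro sum_mono2) (auto simp: p_def)
  finally have 1: "(\<Sum>j<p. (lams ! j)^2) \<le> (\<Sum>j<K. (mus ! j)^2)" .
  have "(\<Sum>i<N. (lams ! i)^2) = (\<Sum>i<p. (lams ! i)^2) + (\<Sum>i\<in>{p..<N}. (lams ! i)^2)"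
  proof -
    have "(\<Sum>i\<in>{0..<p}. (lams ! i)^2) + (\<Sum>i\<in>{p..<N}. (lams ! i)^2) = (\<Sum>i\<in>{0..<N}. (lams ! i)^2)"
      by (rule sum.atLeastLessThan_concat) (auto simp: p_def)
    then show ?thesis by (simp add: lessThan_atLeast0)
  qed
  moreover have "{p..<N} = {K..<N}" by (auto simp: p_def)
  ultimately show ?thesis using 1 by simp
qed

lemma dist_bound:
  fixes X V :: "real mat"
  assumes X: "X \<in> carrier_mat N m" and V: "V \<in> carrier_mat m K" and VV: "V\<^sup>T * V = 1\<^sub>m K"
    and eig: "\<forall>j<K. (X\<^sup>T * X) *\<^sub>v col V j = mus ! j \<cdot>\<^sub>v col V j"
    and Km: "K \<le> m"
    and lams: "sorted_eigenvalues (X * X\<^sup>T) lams" and mus: "sorted_eigenvalues (X\<^sup>T * X) mus"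
    and a: "a < N" and b: "b < N"
  shows "\<bar>eucl_dist (row X a) (row X b) - eucl_dist (row (X * V) a) (row (X * V) b)\<bar>
          \<le> sqrt 2 * root 4 (\<Sum>i\<in>{K..<N}. (lams ! i)^2)"
proof -
  define S where "S = (\<Sum>i\<in>{K..<N}. (lams ! i)^2)"
  define W where "W = X * V"
  define C where "C = X * X\<^sup>T - W * W\<^sup>T"
  define F where "F = (\<Sum>a<N. \<Sum>b<N. (C $$ (a,b))^2)"
  have W: "W \<in> carrier_mat N K" unfolding W_def using X V by simp
  have S0: "0 \<le> S" unfolding S_def by (intro sum_nonneg) simp
  have cp: "char_poly (X * X\<^sup>T) = (\<Prod>a\<leftarrow>lams. [:- a, 1:])" using lams unfolding sorted_eigenvalues_def by simp
  have "F = tr ((X * X\<^sup>T) * (X * X\<^sup>T)) - (\<Sum>j<K. (mus ! j)^2)"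
    unfolding F_def C_def W_def by (rule frob_C[OF X V VV eig])
  also have "tr ((X * X\<^sup>T) * (X * X\<^sup>T)) = (\<Sum>i<N. (lams ! i)^2)"
    using X by (intro tr_sq_eigen[OF _ cp]) simp
  finally have "F \<le> S" unfolding S_def using F_le_S[OF X Km lams mus] by simp
  have Cidx: "C $$ (i,j) = row X i \<bullet> row X j - row W i \<bullet> row W j" if "i < N" "j < N" for i j
    unfolding C_def using that X W by simp
  define d1 where "d1 = eucl_dist (row X a) (row X b)"
  define d2 where "d2 = eucl_dist (row W a) (row W b)"
  have d1: "d1^2 = row X a \<bullet> row X a + row X b \<bullet> row X b - 2 * (row X a \<bullet> row X b)"
    unfolding d1_def using X a b by (intro dist_sq_expand[of _ m]) auto
  have d2: "d2^2 = row W a \<bullet> row W a + row W b \<bullet> row W b - 2 * (row W a \<bullet> row W b)"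
    unfolding d2_def using W a b by (intro dist_sq_expand[of _ K]) auto
  have cX: "row X b \<bullet> row X a = row X a \<bullet> row X b" by (rule comm_scalar_prod[of _ m]) (use X a b in auto)
  have cW: "row W b \<bullet> row W a = row W a \<bullet> row W b" by (rule comm_scalar_prod[of _ K]) (use W a b in auto)
  have symC: "C $$ (b,a) = C $$ (a,b)" using Cidx[OF a b] Cidx[OF b a] cX cW by simp
  have dd: "d1^2 - d2^2 = C $$ (a,a) + C $$ (b,b) - 2 * C $$ (a,b)"
    using d1 d2 Cidx[OF a a] Cidx[OF b b] Cidx[OF a b] by simp
  have key: "\<bar>d1^2 - d2^2\<bar> \<le> 2 * sqrt S"
  proof (cases "a = b")
    case True
    then show ?thesis using dd S0 by simp
  next
    case False
    have "(d1^2 - d2^2)^2 \<le> 4 * ((C $$ (a,a))^2 + (C $$ (b,b))^2 + (C $$ (a,b))^2 + (C $$ (b,a))^2)"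
    proof -
      define c1 where "c1 = C $$ (a,a)"
      define c2 where "c2 = C $$ (b,b)"
      define c3 where "c3 = C $$ (a,b)"
      have "(c1 + c2 - 2 * c3)^2 = 4 * (c1^2 + c2^2 + c3^2 + c3^2) - ((c1 - c2)^2 + 2 * (c1 + c3)^2 + 2 * (c2 + c3)^2)"
        by (simp add: power2_eq_square algebra_simps)
      moreover have "0 \<le> (c1 - c2)^2 + 2 * (c1 + c3)^2 + 2 * (c2 + c3)^2" by simp
      ultimately have "(c1 + c2 - 2 * c3)^2 \<le> 4 * (c1^2 + c2^2 + c3^2 + c3^2)" by linarith
      then show ?thesis unfolding dd symC c1_def c2_def c3_def .
    qed
    also have "(C $$ (a,a))^2 + (C $$ (b,b))^2 + (C $$ (a,b))^2 + (C $$ (b,a))^2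
        = (\<Sum>p\<in>{(a,a),(b,b),(a,b),(b,a)}. (C $$ p)^2)"
      using False by simp
    also have "\<dots> \<le> (\<Sum>p\<in>{..<N} \<times> {..<N}. (C $$ p)^2)"
      using a b by (intro sum_mono2) auto
    also have "\<dots> = F" unfolding F_def by (simp add: sum.cartesian_product)
    finally have "(d1^2 - d2^2)^2 \<le> 4 * S" using \<open>F \<le> S\<close> by simp
    then have "sqrt ((d1^2 - d2^2)^2) \<le> sqrt (4 * S)" by (rule real_sqrt_le_mono)
    then show ?thesis by (simp add: real_sqrt_mult)
  qed
  have "\<bar>d1 - d2\<bar> \<le> sqrt \<bar>d1^2 - d2^2\<bar>"
    by (rule abs_diff_sqrt) (simp_all add: d1_def d2_def eucl_dist_def sum_nonneg)
  also have "\<dots> \<le> sqrt (2 * sqrt S)" using key by (rule real_sqrt_le_mono)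
  also have "\<dots> = sqrt 2 * root 4 S" by (simp add: root4_sqrt real_sqrt_mult)
  finally show ?thesis unfolding d1_def d2_def W_def S_def .
qed

theorem mainTheorem4:
  fixes M K N w1 w2 :: nat and f1 :: "real \<Rightarrow> real" and ts :: "real list"
    and X V :: "real mat" and lams :: "real list" and \<tau> :: real
  assumes "K \<le> M + 1"
    and "w1 > 0" and "w2 > 0"
    and "2 * pi / real w2 \<le> 2 * pi / real w1"
    and "continuous_on UNIV f1"
    and "\<forall>t. f1 (t + 2 * pi / real w1) = f1 t"
    and "\<tau> = 2 * pi / (real w2 * real (M + 1))"
    and "distinct ts" and "length ts = N"
    and "set ts \<subseteq> {0 .. 2 * pi / real w1}"
    and "X = mat N (M + 1) (\<lambda>(i, j). f1 (ts ! i + real j * \<tau>))"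
    and "inj_on (row X) {..<N}"
    and "sorted_eigenvalues (X * transpose_mat X) lams"
    and "top_right_singular_vectors X K V"
  shows "\<bar>max_pers1 eucl_dist (row_cloud X) / sqrt 3
          - max_pers1 eucl_dist (row_cloud (X * V)) / sqrt 3\<bar>
         \<le> sqrt (8 / 3) * root 4 (\<Sum>i\<in>{K..<N}. (lams ! i)^2)"
proof -
  define m where "m = M + 1"
  define S where "S = (\<Sum>i\<in>{K..<N}. (lams ! i)^2)"
  define \<epsilon> where "\<epsilon> = sqrt 2 * root 4 S"
  have X: "X \<in> carrier_mat N m" using assms(11) unfolding m_def by simp
  have dcX: "dim_col X = m" using X by simp
  have V: "V \<in> carrier_mat m K" and VV: "V\<^sup>T * V = 1\<^sub>m K"
    using assms(14) dcX unfolding top_right_singular_vectors_def by auto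
  obtain mus where mus: "sorted_eigenvalues (X\<^sup>T * X) mus"
    and eig: "\<forall>j<K. (X\<^sup>T * X) *\<^sub>v col V j = mus ! j \<cdot>\<^sub>v col V j"
    using assms(14) unfolding top_right_singular_vectors_def by auto
  have Km: "K \<le> m" using assms(1) unfolding m_def by simp
  note lams = assms(13)
  define W where "W = X * V"
  have W: "W \<in> carrier_mat N K" unfolding W_def using X V by simp
  define f where "f x = vec K (\<lambda>j. x \<bullet> col V j)" for x :: "real vec"
  define g where "g y = row X (SOME i. i < N \<and> row W i = y)" for y :: "real vec"
  have S1: "row_cloud X = row X ` {..<N}" using X unfolding row_cloud_def by auto
  have S2: "row_cloud (X * V) = row W ` {..<N}" using W X unfolding row_cloud_def W_def by auto
  have fr: "f (row X i) = row W i" if "i < N" for i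
    unfolding f_def W_def using row_mult[OF X V that] by simp
  have db: "\<bar>eucl_dist (row X a) (row X b) - eucl_dist (row W a) (row W b)\<bar> \<le> \<epsilon>"
    if "a < N" "b < N" for a b
    unfolding \<epsilon>_def S_def W_def by (rule dist_bound[OF X V VV eig Km lams mus that])
  have eps: "0 \<le> \<epsilon>" unfolding \<epsilon>_def S_def by (intro mult_nonneg_nonneg real_root_ge_zero sum_nonneg) auto
  have st: "\<bar>max_pers1 eucl_dist (row_cloud X) - max_pers1 eucl_dist (row_cloud (X * V))\<bar> \<le> 2 * \<epsilon>"
  proof (rule stability[where f = f and g = g])
    show "finite (row_cloud X)" unfolding S1 by simp
    show "finite (row_cloud (X * V))" unfolding S2 by simp
    show "\<forall>x\<in>row_cloud X. f x \<in> row_cloud (X * V)" unfolding S1 S2 using fr by auto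
    have gy: "g y \<in> row_cloud X \<and> f (g y) = y" if "y \<in> row_cloud (X * V)" for y
    proof -
      from that obtain i where i: "i < N" "row W i = y" unfolding S2 by auto
      then have ex: "\<exists>i. i < N \<and> row W i = y" by blast
      define k where "k = (SOME i. i < N \<and> row W i = y)"
      have k: "k < N \<and> row W k = y" unfolding k_def by (rule someI_ex[OF ex])
      have "g y = row X k" unfolding g_def k_def by simp
      then show ?thesis using k fr unfolding S1 by auto
    qed
    show "\<forall>y\<in>row_cloud (X * V). g y \<in> row_cloud X" using gy by blast
    show "\<forall>y\<in>row_cloud (X * V). f (g y) = y" using gy by blast
    show "\<forall>x\<in>row_cloud X. \<forall>y\<in>row_cloud X. eucl_dist (f x) (f y) \<le> eucl_dist x y + \<epsilon>"
      unfolding S1 using db fr by fastforce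
    show "\<forall>x\<in>row_cloud X. \<forall>y\<in>row_cloud X. eucl_dist x y \<le> eucl_dist (f x) (f y) + \<epsilon>"
      unfolding S1 using db fr by fastforce
    show "0 \<le> \<epsilon>" by (rule eps)
  qed
  have s8: "sqrt (8 / 3) = 2 * sqrt 2 / sqrt 3"
  proof -
    have "sqrt 8 = sqrt 4 * sqrt 2" using real_sqrt_mult[of 4 2] by simp
    then have "sqrt 8 = 2 * sqrt 2" by simp
    then show ?thesis by (simp add: real_sqrt_divide)
  qed
  have "\<bar>max_pers1 eucl_dist (row_cloud X) / sqrt 3 - max_pers1 eucl_dist (row_cloud (X * V)) / sqrt 3\<bar>
      = \<bar>max_pers1 eucl_dist (row_cloud X) - max_pers1 eucl_dist (row_cloud (X * V))\<bar> / sqrt 3"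
    by (simp add: diff_divide_distrib[symmetric])
  also have "\<dots> \<le> 2 * \<epsilon> / sqrt 3" using st by (simp add: divide_right_mono)
  also have "\<dots> = sqrt (8 / 3) * root 4 S" unfolding s8 \<epsilon>_def by simp
  finally show ?thesis unfolding S_def .
qed

end
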